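(* Let $f=a_0+a_1 z+\cdots+a_mz^m\in \mathbb{Z}[z]$ be primitive (the greatest common divisor of its coefficients is $1$). Suppose there exist positive real numbers $\alpha<\beta$ and an index $j\in\{0,1,\ldots,m\}$ such that \[ |a_j| \alpha^j>\sum_{i=0,\, i\neq j}^m |a_i|\beta^i. \] Further, suppose there exist natural numbers $n$, $d$, $k$, $\ell\leq m$, and a prime $p$ with $p\nmid d$ such that $\beta-d\geq n\geq \alpha+d$, $f(n)=\pm p^k d$, $\gcd(k,\ell)=1$, $p^k$ divides $\frac{f^{(i)}(n)}{i!}$ for each $i=0, 1, \ldots,\ell-1$, and, in case $k>1$, also $p\nmid \frac{f^{(\ell)}(n)}{\ell!}$. Then $f$ is irreducible in $\mathbb{Z}[z]$.
   Context: $f^{(i)}$ denotes the $i$-th derivative of $f$ with respect to $z$. Natural numbers are positive integers. *)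

theory Defs
  imports "HOL-Computational_Algebra.Computational_Algebra"
begin

end

theory Submission
  imports Defs
begin

definition wt :: "int \<Rightarrow> nat \<Rightarrow> nat \<Rightarrow> int poly \<Rightarrow> nat \<Rightarrow> nat" where
  "wt q l k P i = l * multiplicity q (coeff P i) + k * i"

lemma sum_pow_dvd:
  fixes q :: int
  assumes "finite S" "\<And>i. i \<in> S \<Longrightarrow> t i \<noteq> 0 \<Longrightarrow> multiplicity q (t i) > m"
  shows "q ^ Suc m dvd sum t S"
proof (rule dvd_sum)
  fix i assume i: "i \<in> S"
  show "q ^ Suc m dvd t i"
  proof (cases "t i = 0")
    case False
    with assms(2)[OF i] show ?thesis by (intro multiplicity_dvd') auto
  qed simp
qed

lemma term_wt:
  fixes q :: int
  assumes q: "prime q" and x: "coeff P i \<noteq> 0" and y: "coeff Q (N - i) \<noteq> 0" and iN: "i \<le> N"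
  shows "l * multiplicity q (coeff P i * coeff Q (N - i)) + k * N = wt q l k P i + wt q l k Q (N - i)"
proof -
  have "multiplicity q (coeff P i * coeff Q (N - i)) = multiplicity q (coeff P i) + multiplicity q (coeff Q (N - i))"
    using q x y by (intro prime_elem_multiplicity_mult_distrib) auto
  moreover have "k * N = k * i + k * (N - i)" using iN by (simp add: diff_mult_distrib2)
  ultimately show ?thesis unfolding wt_def by (simp add: algebra_simps)
qed

lemma prod_key:
  fixes q :: int and P Q :: "int poly"
  assumes q: "prime q" and l: "l > 0"
    and Pr: "coeff P r \<noteq> 0" "wt q l k P r = A"
    and Pge: "\<And>i. coeff P i \<noteq> 0 \<Longrightarrow> wt q l k P i \<ge> A"
    and Pgt: "\<And>i. i > r \<Longrightarrow> coeff P i \<noteq> 0 \<Longrightarrow> wt q l k P i > A"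
    and Qs: "coeff Q s \<noteq> 0" "wt q l k Q s = B"
    and Qge: "\<And>i. coeff Q i \<noteq> 0 \<Longrightarrow> wt q l k Q i \<ge> B"
    and Qgt: "\<And>i. i > s \<Longrightarrow> coeff Q i \<noteq> 0 \<Longrightarrow> wt q l k Q i > B"
  shows "coeff (P * Q) (r + s) \<noteq> 0 \<and> wt q l k (P * Q) (r + s) = A + B"
    and "\<And>N. coeff (P * Q) N \<noteq> 0 \<Longrightarrow> wt q l k (P * Q) N \<ge> A + B"
    and "\<And>N. N > r + s \<Longrightarrow> coeff (P * Q) N \<noteq> 0 \<Longrightarrow> wt q l k (P * Q) N > A + B"
proof -
  define t where "t N i = coeff P i * coeff Q (N - i)" for N i
  have cN: "coeff (P * Q) N = (\<Sum>i\<le>N. t N i)" for N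
    unfolding t_def coeff_mult by simp
  have twt: "l * multiplicity q (t N i) + k * N = wt q l k P i + wt q l k Q (N - i)"
    if "t N i \<noteq> 0" "i \<le> N" for N i
    using term_wt[OF q, of P i Q N l k] that unfolding t_def by auto
  have tge: "l * multiplicity q (t N i) + k * N \<ge> A + B" if "t N i \<noteq> 0" "i \<le> N" for N i
  proof -
    have "coeff P i \<noteq> 0" "coeff Q (N - i) \<noteq> 0" using that(1) unfolding t_def by auto
    with Pge Qge twt[OF that] show ?thesis by fastforce
  qed
  show ge: "wt q l k (P * Q) N \<ge> A + B" if nz: "coeff (P * Q) N \<noteq> 0" for N
  proof (rule ccontr)
    assume neg: "\<not> ?thesis"
    define m where "m = multiplicity q (coeff (P * Q) N)"
    have lt: "l * m + k * N < A + B" using neg unfolding m_def wt_def by simp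
    have "q ^ Suc m dvd (\<Sum>i\<le>N. t N i)"
    proof (rule sum_pow_dvd)
      fix i assume "i \<in> {..N}" "t N i \<noteq> 0"
      then have "A + B \<le> l * multiplicity q (t N i) + k * N" using tge[of N i] by simp
      with lt have "l * m < l * multiplicity q (t N i)" by linarith
      then show "m < multiplicity q (t N i)" by simp
    qed simp
    then have "q ^ Suc m dvd coeff (P * Q) N" using cN by simp
    then have "Suc m \<le> m" unfolding m_def
      by (intro multiplicity_geI) (use nz q not_prime_unit in blast)+
    then show False by simp
  qed
  show "wt q l k (P * Q) N > A + B" if N: "N > r + s" and nz: "coeff (P * Q) N \<noteq> 0" for N
  proof (rule ccontr)
    assume neg: "\<not> ?thesis"
    define m where "m = multiplicity q (coeff (P * Q) N)"
    have lt: "l * m + k * N \<le> A + B" using neg unfolding m_def wt_def by simp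
    have "q ^ Suc m dvd (\<Sum>i\<le>N. t N i)"
    proof (rule sum_pow_dvd)
      fix i assume i: "i \<in> {..N}" and tz: "t N i \<noteq> 0"
      have cz: "coeff P i \<noteq> 0" "coeff Q (N - i) \<noteq> 0" using tz unfolding t_def by auto
      have "wt q l k P i + wt q l k Q (N - i) > A + B"
      proof (cases "i > r")
        case True
        with Pgt[OF True cz(1)] Qge[OF cz(2)] show ?thesis by simp
      next
        case False
        then have "N - i > s" using N by simp
        with Qgt[OF this cz(2)] Pge[OF cz(1)] show ?thesis by simp
      qed
      moreover have "i \<le> N" using i by simp
      ultimately have "l * m < l * multiplicity q (t N i)" using twt[OF tz \<open>i \<le> N\<close>] lt by linarith
      then show "m < multiplicity q (t N i)" by simp
    qed simp
    then have "q ^ Suc m dvd coeff (P * Q) N" using cN by simp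
    then have "Suc m \<le> m" unfolding m_def
      by (intro multiplicity_geI) (use nz q not_prime_unit in blast)+
    then show False by simp
  qed
  show "coeff (P * Q) (r + s) \<noteq> 0 \<and> wt q l k (P * Q) (r + s) = A + B"
  proof -
    define N where "N = r + s"
    define m where "m = multiplicity q (t N r)"
    have trz: "t N r \<noteq> 0" using Pr Qs unfolding t_def N_def by simp
    have meq: "l * m + k * N = A + B" using twt[OF trz] Pr Qs unfolding m_def N_def by simp
    have rest: "q ^ Suc m dvd (\<Sum>i\<in>{..N} - {r}. t N i)"
    proof (rule sum_pow_dvd)
      fix i assume i: "i \<in> {..N} - {r}" and tz: "t N i \<noteq> 0"
      have cz: "coeff P i \<noteq> 0" "coeff Q (N - i) \<noteq> 0" using tz unfolding t_def by auto
      have "wt q l k P i + wt q l k Q (N - i) > A + B"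
      proof (cases "i > r")
        case True
        with Pgt[OF True cz(1)] Qge[OF cz(2)] show ?thesis by simp
      next
        case False
        then have "N - i > s" using i unfolding N_def by auto
        with Qgt[OF this cz(2)] Pge[OF cz(1)] show ?thesis by simp
      qed
      moreover have "i \<le> N" using i by simp
      ultimately have "l * m < l * multiplicity q (t N i)" using twt[OF tz \<open>i \<le> N\<close>] meq by linarith
      then show "m < multiplicity q (t N i)" by simp
    qed simp
    have dm: "q ^ m dvd t N r" unfolding m_def by (rule multiplicity_dvd)
    have ndm: "\<not> q ^ Suc m dvd t N r" unfolding m_def using trz q
      using power_dvd_iff_le_multiplicity[of "t N r" q "Suc (multiplicity q (t N r))"] not_prime_unit by auto
    have split: "coeff (P * Q) N = t N r + (\<Sum>i\<in>{..N} - {r}. t N i)"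
      unfolding cN by (subst sum.remove[of _ r]) (auto simp: N_def)
    have d1: "q ^ m dvd coeff (P * Q) N"
      unfolding split using dm rest by (meson dvd_add dvd_trans le_imp_power_dvd le_Suc_eq order_refl)
    have d2: "\<not> q ^ Suc m dvd coeff (P * Q) N"
      unfolding split using ndm rest by (simp add: dvd_add_left_iff)
    have nz: "coeff (P * Q) N \<noteq> 0" using d2 by auto
    have "multiplicity q (coeff (P * Q) N) = m" by (rule multiplicity_eqI[OF d1 d2])
    with nz meq show ?thesis unfolding wt_def N_def by simp
  qed
qed

abbreviation cp :: "int poly \<Rightarrow> complex poly" where "cp p \<equiv> map_poly of_int p"

lemma cp_mult: "cp (g * h) = cp g * cp h"
  by (rule poly_eqI) (simp add: coeff_map_poly coeff_mult)

lemma degree_cp: "degree (cp p) = degree p"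
  by (rule degree_map_poly) simp

lemma coeff_cp: "coeff (cp p) i = of_int (coeff p i)"
  by (simp add: coeff_map_poly)

lemma poly_cp: "poly (cp p) (of_int x) = of_int (poly p x)"
  by (simp add: poly_altdef degree_cp coeff_cp)

lemma root_bound:
  fixes q :: "complex poly" and D :: real
  assumes "q \<noteq> 0" "\<And>\<theta>. poly q \<theta> = 0 \<Longrightarrow> cmod (x - \<theta>) > D" "D > 0"
  shows "cmod (poly q x) \<ge> cmod (lead_coeff q) * D ^ degree q \<and>
         (degree q \<ge> 1 \<longrightarrow> cmod (poly q x) > cmod (lead_coeff q) * D ^ degree q)"
  using assms(1,2)
proof (induction "degree q" arbitrary: q)
  case 0
  then obtain c where "q = [:c:]" by (metis degree_eq_zeroE)
  then show ?case by simp
next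
  case (Suc m)
  then have "\<not> constant (poly q)" by (simp add: constant_degree)
  then obtain \<theta> where th: "poly q \<theta> = 0" using fundamental_theorem_of_algebra by blast
  then obtain q1 where q1: "q = [:-\<theta>, 1:] * q1" using poly_eq_0_iff_dvd by (metis dvdE)
  have q1nz: "q1 \<noteq> 0" using Suc.prems q1 by auto
  have "degree q = degree [:-\<theta>, 1:] + degree q1" unfolding q1 by (rule degree_mult_eq) (use q1nz in auto)
  then have deg: "degree q = Suc (degree q1)" by simp
  have "lead_coeff q = lead_coeff [:-\<theta>, 1:] * lead_coeff q1" unfolding q1 by (rule lead_coeff_mult)
  then have lc: "lead_coeff q = lead_coeff q1" by simp
  have roots1: "cmod (x - \<theta>') > D" if "poly q1 \<theta>' = 0" for \<theta>'
    using Suc.prems(2)[of \<theta>'] that q1 by simp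
  have IH: "cmod (poly q1 x) \<ge> cmod (lead_coeff q1) * D ^ degree q1"
    using Suc.hyps(1)[of q1] deg Suc.hyps(2) q1nz roots1 by auto
  have pos: "cmod (lead_coeff q1) * D ^ degree q1 > 0" using q1nz assms(3) by simp
  have "poly q x = (x - \<theta>) * poly q1 x" unfolding q1 by (simp add: algebra_simps)
  then have "cmod (poly q x) = cmod (x - \<theta>) * cmod (poly q1 x)" by (simp add: norm_mult)
  also have "\<dots> > D * (cmod (lead_coeff q1) * D ^ degree q1)"
  proof -
    have "cmod (x - \<theta>) > D" using Suc.prems(2) th by simp
    then have "cmod (x - \<theta>) * cmod (poly q1 x) \<ge> cmod (x - \<theta>) * (cmod (lead_coeff q1) * D ^ degree q1)"
      using IH by (intro mult_left_mono) auto
    moreover have "cmod (x - \<theta>) * (cmod (lead_coeff q1) * D ^ degree q1) > D * (cmod (lead_coeff q1) * D ^ degree q1)"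
      using \<open>cmod (x - \<theta>) > D\<close> pos by (intro mult_strict_right_mono) auto
    ultimately show ?thesis by linarith
  qed
  also have "D * (cmod (lead_coeff q1) * D ^ degree q1) = cmod (lead_coeff q) * D ^ degree q"
    using deg lc by simp
  finally show ?case using deg by simp
qed

lemma taylor_comm:
  fixes f :: "int poly"
  shows "(pderiv ^^ i) (pcompose f [:c, 1:]) = pcompose ((pderiv ^^ i) f) [:c, 1:]"
  by (induction i) (simp_all add: pderiv_pcompose pderiv_pCons)

lemma taylor_coeff:
  fixes f :: "int poly"
  shows "poly ((pderiv ^^ i) f) c = fact i * coeff (pcompose f [:c, 1:]) i"
proof -
  have "poly ((pderiv ^^ i) f) c = poly (pcompose ((pderiv ^^ i) f) [:c, 1:]) 0"
    by (simp add: poly_pcompose)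
  also have "\<dots> = poly ((pderiv ^^ i) (pcompose f [:c, 1:])) 0" by (simp add: taylor_comm)
  also have "\<dots> = fact i * coeff (pcompose f [:c, 1:]) i"
    by (simp add: poly_0_coeff_0 coeff_higher_pderiv pochhammer_fact)
  finally show ?thesis .
qed

lemma wt_exists:
  fixes P :: "int poly"
  assumes "P \<noteq> 0"
  obtains r A where "coeff P r \<noteq> 0" "wt q l k P r = A"
    "\<And>i. coeff P i \<noteq> 0 \<Longrightarrow> wt q l k P i \<ge> A"
    "\<And>i. i > r \<Longrightarrow> coeff P i \<noteq> 0 \<Longrightarrow> wt q l k P i > A"
proof -
  define S where "S = {i. coeff P i \<noteq> 0}"
  have fS: "finite S" unfolding S_def by (rule finite_subset[of _ "{..degree P}"]) (auto intro: le_degree)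
  have "degree P \<in> S" unfolding S_def using assms by simp
  then have neS: "S \<noteq> {}" by blast
  define A where "A = Min (wt q l k P ` S)"
  define T where "T = {i \<in> S. wt q l k P i = A}"
  have fT: "finite T" using fS unfolding T_def by simp
  have "A \<in> wt q l k P ` S" unfolding A_def using fS neS by (intro Min_in) auto
  then obtain i0 where "i0 \<in> S" "wt q l k P i0 = A" by auto
  then have "i0 \<in> T" unfolding T_def by simp
  then have neT: "T \<noteq> {}" by blast
  define r where "r = Max T"
  have rT: "r \<in> T" unfolding r_def using fT neT by simp
  show ?thesis
  proof
    show "coeff P r \<noteq> 0" using rT unfolding T_def S_def by simp
    show "wt q l k P r = A" using rT unfolding T_def by simp
    show ge: "wt q l k P i \<ge> A" if "coeff P i \<noteq> 0" for i
      unfolding A_def using fS that by (intro Min_le) (auto simp: S_def)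
    show "wt q l k P i > A" if "i > r" "coeff P i \<noteq> 0" for i
    proof (rule ccontr)
      assume "\<not> ?thesis"
      with ge[OF that(2)] have "i \<in> T" unfolding T_def S_def using that by simp
      then have "i \<le> r" unfolding r_def using fT by simp
      with that show False by simp
    qed
  qed
qed

lemma arith_contra:
  fixes l k r e a :: nat
  assumes "l > 0" "k > 0" "gcd k l = 1" "0 < r" "r \<le> l" "l * e + k * r = l * a" "a < k"
  shows False
proof -
  have "l * e \<le> l * a" using assms(6) by linarith
  then have ea: "e \<le> a" using assms(1) by simp
  have "k * r = l * (a - e)" using assms(6) ea by (simp add: diff_mult_distrib2)
  then have "l dvd k * r" by simp
  moreover have "coprime l k" using assms(3) by (simp add: coprime_iff_gcd_eq_1 gcd.commute)
  ultimately have "l dvd r" using coprime_dvd_mult_right_iff by blast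
  then have "r = l" using assms(4,5) by (meson dvd_imp_le le_antisym)
  with \<open>k * r = l * (a - e)\<close> assms(1) have "k = a - e" by simp
  with assms(7) show False by linarith
qed

lemma f_roots:
  fixes f :: "int poly" and \<alpha> \<beta> :: real and \<theta> :: complex
  assumes j: "j \<le> degree f"
    and dom: "\<bar>real_of_int (coeff f j)\<bar> * \<alpha> ^ j >
              (\<Sum>i\<in>{0..degree f} - {j}. \<bar>real_of_int (coeff f i)\<bar> * \<beta> ^ i)"
    and a0: "0 < \<alpha>"
    and rt: "poly (cp f) \<theta> = 0"
  shows "cmod \<theta> < \<alpha> \<or> cmod \<theta> > \<beta>"
proof (rule ccontr)
  assume "\<not> ?thesis"
  then have t1: "\<alpha> \<le> cmod \<theta>" and t2: "cmod \<theta> \<le> \<beta>" by auto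
  define S where "S = {0..degree f} - {j}"
  have "poly (cp f) \<theta> = (\<Sum>i\<in>{0..degree f}. of_int (coeff f i) * \<theta> ^ i)"
    by (simp add: poly_altdef degree_cp coeff_cp atLeast0AtMost)
  also have "\<dots> = of_int (coeff f j) * \<theta> ^ j + (\<Sum>i\<in>S. of_int (coeff f i) * \<theta> ^ i)"
    unfolding S_def using j by (subst sum.remove[of _ j]) auto
  finally have eq: "of_int (coeff f j) * \<theta> ^ j = - (\<Sum>i\<in>S. of_int (coeff f i) * \<theta> ^ i)"
    using rt by (simp add: eq_neg_iff_add_eq_0 add.commute)
  have "\<bar>real_of_int (coeff f j)\<bar> * \<alpha> ^ j \<le> \<bar>real_of_int (coeff f j)\<bar> * cmod \<theta> ^ j"
    using t1 a0 by (intro mult_left_mono power_mono) auto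
  also have "\<dots> = cmod (of_int (coeff f j) * \<theta> ^ j)" by (simp add: norm_mult norm_power)
  also have "\<dots> = cmod (\<Sum>i\<in>S. of_int (coeff f i) * \<theta> ^ i)" using eq by simp
  also have "\<dots> \<le> (\<Sum>i\<in>S. cmod (of_int (coeff f i) * \<theta> ^ i))" by (rule norm_sum)
  also have "\<dots> = (\<Sum>i\<in>S. \<bar>real_of_int (coeff f i)\<bar> * cmod \<theta> ^ i)" by (simp add: norm_mult norm_power)
  also have "\<dots> \<le> (\<Sum>i\<in>S. \<bar>real_of_int (coeff f i)\<bar> * \<beta> ^ i)"
    using t2 by (intro sum_mono mult_left_mono power_mono) auto
  finally show False using dom unfolding S_def by simp
qed

lemma factor_bound:
  fixes f g :: "int poly" and n d :: nat
  assumes f0: "f \<noteq> 0" and gf: "g dvd f" and dg: "degree g \<ge> 1" and d0: "d > 0"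
    and roots: "\<And>\<theta>. poly (cp f) \<theta> = 0 \<Longrightarrow> cmod (of_nat n - \<theta>) > real d"
  shows "\<bar>poly g (int n)\<bar> > int d"
proof -
  obtain h where fgh: "f = g * h" using gf by (elim dvdE)
  have g0: "g \<noteq> 0" using fgh f0 by auto
  have "degree (cp g) \<ge> 1" using dg by (simp add: degree_cp)
  then have cg0: "cp g \<noteq> 0" by auto
  have rg: "cmod (of_nat n - \<theta>) > real d" if "poly (cp g) \<theta> = 0" for \<theta>
    using roots[of \<theta>] that fgh by (simp add: cp_mult)
  have rb: "cmod (poly (cp g) (of_nat n)) > cmod (lead_coeff (cp g)) * real d ^ degree (cp g)"
    using root_bound[OF cg0 rg] d0 dg by (simp add: degree_cp)
  have "lead_coeff (cp g) = of_int (lead_coeff g)" by (simp add: coeff_cp degree_cp)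
  moreover have "lead_coeff g \<noteq> 0" using g0 by simp
  then have "\<bar>lead_coeff g\<bar> \<ge> 1" by arith
  then have "\<bar>real_of_int (lead_coeff g)\<bar> \<ge> 1" by (metis of_int_1_le_iff of_int_abs)
  ultimately have lc: "cmod (lead_coeff (cp g)) \<ge> 1" by simp
  have "real d ^ 1 \<le> real d ^ degree g" by (rule power_increasing) (use dg d0 in auto)
  then have dd: "real d \<le> real d ^ degree g" by simp
  have "1 * real d \<le> cmod (lead_coeff (cp g)) * real d ^ degree g"
    by (rule mult_mono[OF lc dd]) auto
  then have "cmod (lead_coeff (cp g)) * real d ^ degree (cp g) \<ge> real d" by (simp add: degree_cp)
  with rb have "cmod (poly (cp g) (of_nat n)) > real d" by linarith
  moreover have "poly (cp g) (of_nat n) = of_int (poly g (int n))"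
    using poly_cp[of g "int n"] by simp
  ultimately show ?thesis by simp
qed

theorem theorem2:
  fixes f :: "int poly" and \<alpha> \<beta> :: real and j n d k l p :: nat
  assumes prim: "content f = 1"
    and ab: "0 < \<alpha>" "\<alpha> < \<beta>"
    and j: "j \<le> degree f"
    and dom: "\<bar>real_of_int (coeff f j)\<bar> * \<alpha> ^ j >
              (\<Sum>i\<in>{0..degree f} - {j}. \<bar>real_of_int (coeff f i)\<bar> * \<beta> ^ i)"
    and pos: "n > 0" "d > 0" "k > 0" "l > 0"
    and l: "l \<le> degree f"
    and p: "prime p" "\<not> p dvd d"
    and nb: "\<beta> - real d \<ge> real n" "real n \<ge> \<alpha> + real d"
    and fn: "poly f (int n) = int (p ^ k * d) \<or> poly f (int n) = - int (p ^ k * d)"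
    and gcd: "gcd k l = 1"
    and divs: "\<And>i. i < l \<Longrightarrow>
                 int (p ^ k) dvd (poly ((pderiv ^^ i) f) (int n) div fact i)"
    and ndiv: "k > 1 \<Longrightarrow> \<not> int p dvd (poly ((pderiv ^^ l) f) (int n) div fact l)"
  shows "irreducible f"
proof (rule irreducibleI)
  have degf: "degree f \<ge> 1" using l pos by simp
  then show f0: "f \<noteq> 0" by auto
  show "\<not> is_unit f" using degf by (auto simp: is_unit_poly_iff)
  fix g h assume fgh: "f = g * h"
  show "is_unit g \<or> is_unit h"
  proof (rule ccontr)
    assume nu: "\<not> (is_unit g \<or> is_unit h)"
    have g0: "g \<noteq> 0" and h0: "h \<noteq> 0" using f0 fgh by auto
    have cgh: "content g * content h = 1" using prim fgh by (simp add: content_mult)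
    have u1: "content g dvd 1" unfolding cgh[symmetric] by simp
    have u2: "content h dvd 1" unfolding cgh[symmetric] by simp
    have cg: "content g = 1" using is_unit_normalize[OF u1] normalize_content[of g] by simp
    have ch: "content h = 1" using is_unit_normalize[OF u2] normalize_content[of h] by simp
    have deg1: "degree x \<ge> 1" if "content x = 1" "\<not> is_unit x" for x :: "int poly"
    proof (rule ccontr)
      assume "\<not> ?thesis"
      then have "degree x = 0" by simp
      then obtain c where xc: "x = [:c:]" by (rule degree_eq_zeroE)
      then have "normalize c = 1" using that(1) by (simp add: content_const)
      then have "is_unit c" by (simp add: normalize_1_iff)
      then have "is_unit x" using xc is_unit_poly_iff by blast
      with that(2) show False by simp
    qed
    have dg: "degree g \<ge> 1" using deg1[OF cg] nu by blast
    have dh: "degree h \<ge> 1" using deg1[OF ch] nu by blast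
    have roots: "cmod (of_nat n - \<theta>) > real d" if "poly (cp f) \<theta> = 0" for \<theta>
    proof -
      have "cmod \<theta> < \<alpha> \<or> cmod \<theta> > \<beta>" using f_roots[OF j dom ab(1) that] .
      moreover have "cmod (of_nat n - \<theta>) \<ge> \<bar>real n - cmod \<theta>\<bar>"
        using norm_triangle_ineq3[of "of_nat n" \<theta>] by simp
      moreover have "\<bar>real n - cmod \<theta>\<bar> > real d"
      proof (cases "cmod \<theta> < \<alpha>")
        case True
        then have "real n - cmod \<theta> > real d" using nb(2) by linarith
        then show ?thesis by linarith
      next
        case False
        with calculation(1) have "cmod \<theta> > \<beta>" by blast
        then have "cmod \<theta> - real n > real d" using nb(1) by linarith
        then show ?thesis by linarith
      qed
      ultimately show ?thesis by linarith
    qed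
    define gn where "gn = poly g (int n)"
    define hn where "hn = poly h (int n)"
    have gdf: "g dvd f" and hdf: "h dvd f" using fgh by simp_all
    have gb: "\<bar>gn\<bar> > int d" unfolding gn_def
      by (rule factor_bound[OF f0 gdf dg pos(2) roots])
    have hb: "\<bar>hn\<bar> > int d" unfolding hn_def
      by (rule factor_bound[OF f0 hdf dh pos(2) roots])
    have fnv: "poly f (int n) = gn * hn" unfolding gn_def hn_def fgh by simp
    have ip: "prime (int p)" using p(1) by simp
    have ndd: "\<not> int p dvd int d" using p(2) by simp
    have pd: "int p dvd x" if xb: "\<bar>x\<bar> > int d" and xd: "x dvd poly f (int n)" for x
    proof (rule ccontr)
      assume "\<not> ?thesis"
      then have "coprime (int p) x" using ip by (simp add: prime_imp_coprime)
      then have cpk: "coprime (int p ^ k) x" by simp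
      have "x dvd int (p ^ k * d)" using xd fn by auto
      then have "x dvd int p ^ k * int d" by simp
      then have "x dvd int d" using cpk by (metis coprime_commute coprime_dvd_mult_right_iff)
      then have "\<bar>x\<bar> \<le> int d" using dvd_imp_le_int[of "int d" x] pos(2) by simp
      with xb show False by simp
    qed
    have pg: "int p dvd gn" using pd[OF gb] fnv by simp
    have ph: "int p dvd hn" using pd[OF hb] fnv by simp
    define a where "a = multiplicity (int p) gn"
    define b where "b = multiplicity (int p) hn"
    have gn0: "gn \<noteq> 0" and hn0: "hn \<noteq> 0" using gb hb pos by auto
    have a1: "a \<ge> 1" unfolding a_def using pg gn0 ip
      by (simp add: Suc_le_eq prime_multiplicity_gt_zero_iff)
    have b1: "b \<ge> 1" unfolding b_def using ph hn0 ip
      by (simp add: Suc_le_eq prime_multiplicity_gt_zero_iff)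
    have mf: "multiplicity (int p) (poly f (int n)) = k"
    proof -
      have md: "multiplicity (int p) (int d) = 0" using ndd by (rule not_dvd_imp_multiplicity_0)
      have "multiplicity (int p) (int p ^ k * int d) = k"
        using ip pos md by (simp add: prime_elem_multiplicity_mult_distrib)
      then show ?thesis using fn by (auto simp: multiplicity_uminus_right)
    qed
    have abk: "a + b = k" unfolding a_def b_def using mf fnv gn0 hn0 ip
      by (simp add: prime_elem_multiplicity_mult_distrib)
    have k1: "k > 1" using a1 b1 abk by simp
    define F where "F = pcompose f [:int n, 1:]"
    define G where "G = pcompose g [:int n, 1:]"
    define H where "H = pcompose h [:int n, 1:]"
    have FGH: "F = G * H" unfolding F_def G_def H_def fgh by (simp add: pcompose_mult)
    have cF: "coeff F i = poly ((pderiv ^^ i) f) (int n) div fact i" for i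
      unfolding F_def taylor_coeff[of i f "int n"] by simp
    have cF0: "coeff F 0 = poly f (int n)" using taylor_coeff[of 0 f "int n"] unfolding F_def by simp
    have cG0: "coeff G 0 = gn" using taylor_coeff[of 0 g "int n"] unfolding G_def gn_def by simp
    have cH0: "coeff H 0 = hn" using taylor_coeff[of 0 h "int n"] unfolding H_def hn_def by simp
    define W where "W = wt (int p) l k"
    have WF0: "W F 0 = l * k" unfolding W_def wt_def using cF0 mf by simp
    have WFl: "coeff F l \<noteq> 0 \<and> W F l = k * l"
    proof -
      have "\<not> int p dvd coeff F l" using ndiv[OF k1] cF by simp
      then show ?thesis unfolding W_def wt_def by (auto simp: not_dvd_imp_multiplicity_0)
    qed
    have WFmid: "W F i > l * k" if "0 < i" "i < l" "coeff F i \<noteq> 0" for i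
    proof -
      have "int p ^ k dvd coeff F i" using divs[OF that(2)] cF by simp
      then have "multiplicity (int p) (coeff F i) \<ge> k" by (intro multiplicity_geI) (use that(3) ip not_prime_unit in blast)+
      then have "l * multiplicity (int p) (coeff F i) \<ge> l * k" by simp
      moreover have "k * i > 0" using that pos by simp
      ultimately show ?thesis unfolding W_def wt_def by linarith
    qed
    have WFbig: "W F i > l * k" if "i > l" for i
    proof -
      have "k * i > k * l" using that pos by simp
      moreover have "W F i \<ge> k * i" unfolding W_def wt_def by simp
      moreover have "k * l = l * k" by simp
      ultimately show ?thesis by linarith
    qed
    have G0: "G \<noteq> 0" using cG0 gn0 by auto
    have H0: "H \<noteq> 0" using cH0 hn0 by auto
    obtain r A where Gr: "coeff G r \<noteq> 0" "wt (int p) l k G r = A"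
      "\<And>i. coeff G i \<noteq> 0 \<Longrightarrow> wt (int p) l k G i \<ge> A"
      "\<And>i. i > r \<Longrightarrow> coeff G i \<noteq> 0 \<Longrightarrow> wt (int p) l k G i > A"
      by (rule wt_exists[OF G0, where q="int p" and l=l and k=k]) blast
    obtain s B where Hs: "coeff H s \<noteq> 0" "wt (int p) l k H s = B"
      "\<And>i. coeff H i \<noteq> 0 \<Longrightarrow> wt (int p) l k H i \<ge> B"
      "\<And>i. i > s \<Longrightarrow> coeff H i \<noteq> 0 \<Longrightarrow> wt (int p) l k H i > B"
      by (rule wt_exists[OF H0, where q="int p" and l=l and k=k]) blast
    note PK = prod_key[OF ip pos(4) Gr Hs]
    have Aa: "A \<le> l * a" using Gr(3)[of 0] cG0 gn0 unfolding wt_def a_def by simp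
    have Bb: "B \<le> l * b" using Hs(3)[of 0] cH0 hn0 unfolding wt_def b_def by simp
    have E1: "W F (r + s) = A + B" using PK(1) FGH unfolding W_def by simp
    have E2: "A + B \<le> l * k" using PK(2)[of 0] FGH WF0 cF0 fnv gn0 hn0 unfolding W_def by simp
    have nzN: "coeff F (r + s) \<noteq> 0" using PK(1) FGH by simp
    have N: "r + s = l"
    proof -
      consider "r + s = 0" | "0 < r + s \<and> r + s < l" | "r + s = l" | "r + s > l" by linarith
      then show ?thesis
      proof cases
        case 1
        then have "A + B = l * k" using E1 WF0 by simp
        moreover have "W F l > A + B" using PK(3)[of l] 1 pos(4) WFl FGH unfolding W_def by simp
        moreover have "W F l = l * k" using WFl by (simp only: mult.commute)
        ultimately show ?thesis by linarith
      next
        case 2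
        then have "W F (r + s) > l * k" using WFmid[of "r + s"] nzN by simp
        with E1 E2 have False by linarith
        then show ?thesis ..
      next
        case 4
        then have "W F (r + s) > l * k" using WFbig[of "r + s"] by simp
        with E1 E2 have False by linarith
        then show ?thesis ..
      qed
    qed
    have "A + B = k * l" using E1 N WFl by simp
    moreover have "l * a + l * b = k * l"
    proof -
      have "l * a + l * b = l * (a + b)" by (simp add: add_mult_distrib2)
      then show ?thesis using abk by simp
    qed
    ultimately have AB: "A = l * a" "B = l * b" using Aa Bb by linarith+
    show False
    proof (cases "r > 0")
      case True
      have "l * multiplicity (int p) (coeff G r) + k * r = l * a" using Gr(2) AB unfolding wt_def by simp
      moreover have "r \<le> l" using N by simp
      moreover have "a < k" using b1 abk by simp
      ultimately show False using arith_contra[OF pos(4) pos(3) gcd True] by blast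
    next
      case False
      then have s0: "s > 0" "s \<le> l" using N pos by auto
      have "l * multiplicity (int p) (coeff H s) + k * s = l * b" using Hs(2) AB unfolding wt_def by simp
      moreover have "b < k" using a1 abk by simp
      ultimately show False using arith_contra[OF pos(4) pos(3) gcd s0(1) s0(2)] by blast
    qed
  qed
qed

end
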